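(* Let $(S,d)$, $(S',d')$, $(R,d_R)$ be Polish spaces and let $g:S'\times S\to R$ be a (Borel measurable) map that is $K$-Lipschitz in the second variable, i.e. $d_R(g(x,y),g(x,z))\le K\,d(y,z)$ for all $x\in S'$, $y,z\in S$. Let $X$ be an $S'$-valued random variable and $Y,Z$ be $S$-valued random variables such that $X$ is independent of $Y$ and $X$ is independent of $Z$. Then $\rho_P^R(g(X,Y),g(X,Z))\le(1\vee K)\,\rho_P^S(Y,Z)$.
   Context: For a Polish space $(S,d)$ and $\mu,\nu\in\mathcal{P}(S)$, the Prokhorov distance is $\rho_P^S(\mu,\nu)=\inf\{\epsilon>0:\mu(B)\le\nu(B^\epsilon)+\epsilon\text{ for all Borel sets }B\}$, where $B^\epsilon=\{x\in S:d(x,B)<\epsilon\}$. For random variables $U,V$ with values in $S$, $\rho_P^S(U,V)$ means $\rho_P^S(\operatorname{law}(U),\operatorname{law}(V))$. $a\vee b=\max(a,b)$. *)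

theory Defs
  imports "HOL-Probability.Probability"
begin

definition eps_nbhd :: "real \<Rightarrow> 'a::metric_space set \<Rightarrow> 'a set" where
  "eps_nbhd e B = {x. infdist x B < e}"

definition prokhorov_dist :: "'a::metric_space measure \<Rightarrow> 'a measure \<Rightarrow> real" where
  "prokhorov_dist \<mu> \<nu> =
     Inf {e. e > 0 \<and> (\<forall>B\<in>sets borel. measure \<mu> B \<le> measure \<nu> (eps_nbhd e B) + e)}"

end

theory Submission
  imports Defs
begin

lemma eps_nbhd_borel: "eps_nbhd e (B::'a::metric_space set) \<in> sets borel"
  unfolding eps_nbhd_def
  by (intro borel_open open_Collect_less continuous_intros)

lemma eps_nbhd_slice:
  fixes g :: "'b \<times> 'a::metric_space \<Rightarrow> 'c::metric_space"
  assumes lip: "\<And>x y z. dist (g (x, y)) (g (x, z)) \<le> K * dist y z"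
    and e: "e > 0"
    and ne: "Pair x -` g -` C \<noteq> {}"
  shows "eps_nbhd e (Pair x -` g -` C) \<subseteq> Pair x -` g -` eps_nbhd (max 1 K * e) C"
proof
  fix z assume "z \<in> eps_nbhd e (Pair x -` g -` C)"
  then have "infdist z (Pair x -` g -` C) < e" by (simp add: eps_nbhd_def)
  then have "(INF y\<in>Pair x -` g -` C. dist z y) < e" using ne by (simp add: infdist_notempty)
  then obtain y where y: "y \<in> Pair x -` g -` C" "dist z y < e"
    by (metis (no_types, lifting) bdd_below_image_dist cInf_lessD empty_is_image imageE ne)
  have "dist (g (x, z)) (g (x, y)) \<le> K * dist z y" by (rule lip)
  also have "\<dots> \<le> max 1 K * dist z y" by (intro mult_right_mono) auto
  also have "\<dots> < max 1 K * e" using y(2) by (intro mult_strict_left_mono) auto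
  finally have "infdist (g (x, z)) C < max 1 K * e"
    using infdist_le[of "g (x, y)" C "g (x, z)"] y(1) by simp
  then show "z \<in> Pair x -` g -` eps_nbhd (max 1 K * e) C" by (simp add: eps_nbhd_def)
qed


lemma core:
  fixes g :: "'b::polish_space \<times> 'a::polish_space \<Rightarrow> 'c::polish_space"
  assumes PX: "prob_space PX" and PY: "prob_space PY" and PZ: "prob_space PZ"
    and sX: "sets PX = sets borel" and sY: "sets PY = sets borel" and sZ: "sets PZ = sets borel"
    and gm: "g \<in> borel_measurable borel"
    and lip: "\<And>x y z. dist (g (x, y)) (g (x, z)) \<le> K * dist y z"
    and e: "e > 0"
    and hyp: "\<forall>B\<in>sets borel. measure PY B \<le> measure PZ (eps_nbhd e B) + e"
    and C: "C \<in> sets borel"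
  shows "measure (PX \<Otimes>\<^sub>M PY) (g -` C) \<le> measure (PX \<Otimes>\<^sub>M PZ) (g -` eps_nbhd (max 1 K * e) C) + e"
proof -
  define D where "D = eps_nbhd (max 1 K * e) C"
  have D: "D \<in> sets borel" unfolding D_def by (rule eps_nbhd_borel)
  have sXY: "sets (PX \<Otimes>\<^sub>M PY) = sets (borel :: ('b \<times> 'a) measure)"
    by (metis borel_prod sX sY sets_pair_measure_cong)
  have sXZ: "sets (PX \<Otimes>\<^sub>M PZ) = sets (borel :: ('b \<times> 'a) measure)"
    by (metis borel_prod sX sZ sets_pair_measure_cong)
  have gC: "g -` C \<in> sets (borel :: ('b \<times> 'a) measure)"
    using measurable_sets[OF gm C] by simp
  have gD: "g -` D \<in> sets (borel :: ('b \<times> 'a) measure)"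
    using measurable_sets[OF gm D] by simp
  interpret X: prob_space PX by fact
  interpret Y: prob_space PY by fact
  interpret Z: prob_space PZ by fact
  interpret XY: pair_sigma_finite PX PY by unfold_locales
  interpret XZ: pair_sigma_finite PX PZ by unfold_locales
  interpret XYp: prob_space "PX \<Otimes>\<^sub>M PY" by (intro prob_space_pair; fact)
  interpret XZp: prob_space "PX \<Otimes>\<^sub>M PZ" by (intro prob_space_pair; fact)
  have slC: "Pair x -` g -` C \<in> sets borel" for x
    using sets_Pair1[of "g -` C" PX PY x] gC sXY sY by metis
  have slD: "Pair x -` g -` D \<in> sets borel" for x
    using sets_Pair1[of "g -` D" PX PZ x] gD sXZ sZ by metis
  have pt: "emeasure PY (Pair x -` g -` C) \<le> emeasure PZ (Pair x -` g -` D) + ennreal e" for x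
  proof (cases "Pair x -` g -` C = {}")
    case True then show ?thesis by simp
  next
    case False
    have "measure PY (Pair x -` g -` C) \<le> measure PZ (eps_nbhd e (Pair x -` g -` C)) + e"
      using hyp slC by blast
    also have "measure PZ (eps_nbhd e (Pair x -` g -` C)) \<le> measure PZ (Pair x -` g -` D)"
      using eps_nbhd_slice[OF lip e False] slD sZ unfolding D_def
      by (intro Z.finite_measure_mono) auto
    finally have "measure PY (Pair x -` g -` C) \<le> measure PZ (Pair x -` g -` D) + e" by simp
    then have "ennreal (measure PY (Pair x -` g -` C)) \<le> ennreal (measure PZ (Pair x -` g -` D)) + ennreal e"
      using e by (simp add: ennreal_plus[symmetric] del: ennreal_plus)
    then show ?thesis by (simp add: Y.emeasure_eq_measure Z.emeasure_eq_measure)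
  qed
  have "emeasure (PX \<Otimes>\<^sub>M PY) (g -` C) = (\<integral>\<^sup>+x. emeasure PY (Pair x -` g -` C) \<partial>PX)"
    using gC sXY by (intro Y.emeasure_pair_measure_alt) simp
  also have "\<dots> \<le> (\<integral>\<^sup>+x. emeasure PZ (Pair x -` g -` D) + ennreal e \<partial>PX)"
    by (intro nn_integral_mono pt)
  also have "\<dots> = (\<integral>\<^sup>+x. emeasure PZ (Pair x -` g -` D) \<partial>PX) + ennreal e"
  proof -
    have m: "(\<lambda>x. emeasure PZ (Pair x -` g -` D)) \<in> borel_measurable PX"
      using gD sXZ by (intro Z.measurable_emeasure_Pair) simp
    show ?thesis
      by (subst nn_integral_add) (use m in \<open>simp_all add: X.emeasure_space_1\<close>)
  qed
  also have "(\<integral>\<^sup>+x. emeasure PZ (Pair x -` g -` D) \<partial>PX) = emeasure (PX \<Otimes>\<^sub>M PZ) (g -` D)"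
    using gD sXZ by (intro Z.emeasure_pair_measure_alt[symmetric]) simp
  finally have "ennreal (measure (PX \<Otimes>\<^sub>M PY) (g -` C)) \<le> ennreal (measure (PX \<Otimes>\<^sub>M PZ) (g -` D) + e)"
    using e by (simp add: XYp.emeasure_eq_measure XZp.emeasure_eq_measure ennreal_plus[symmetric] del: ennreal_plus)
  then show ?thesis unfolding D_def using e
    by (subst (asm) ennreal_le_iff) (auto intro!: add_nonneg_nonneg)
qed


lemma indep_joint:
  fixes X :: "'w \<Rightarrow> 'b::topological_space" and Y :: "'w \<Rightarrow> 'a::topological_space"
  assumes P: "prob_space M" and Xm: "X \<in> borel_measurable M" and Ym: "Y \<in> borel_measurable M"
    and ind: "prob_space.indep_set M {X -` A \<inter> space M | A. A \<in> sets borel}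
                                {Y -` B \<inter> space M | B. B \<in> sets borel}"
  shows "distr M borel X \<Otimes>\<^sub>M distr M borel Y = distr M (borel \<Otimes>\<^sub>M borel) (\<lambda>x. (X x, Y x))"
proof -
  interpret prob_space M by fact
  have XY: "(\<lambda>x. (X x, Y x)) \<in> measurable M (borel \<Otimes>\<^sub>M borel)" using Xm Ym by (rule measurable_Pair)
  let ?S = "distr M borel X" and ?T = "distr M borel Y" and ?J = "distr M (borel \<Otimes>\<^sub>M borel) (\<lambda>x. (X x, Y x))"
  interpret X: prob_space ?S by (rule prob_space_distr) fact
  interpret Y: prob_space ?T by (rule prob_space_distr) fact
  show ?thesis
  proof (rule pair_measure_eqI)
    show "sigma_finite_measure ?S" ..
    show "sigma_finite_measure ?T" ..
    fix A B assume A: "A \<in> sets ?S" and B: "B \<in> sets ?T"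
    have "emeasure ?J (A \<times> B) = emeasure M ((\<lambda>x. (X x, Y x)) -` (A \<times> B) \<inter> space M)"
      using A B by (intro emeasure_distr[OF XY]) auto
    also have "(\<lambda>x. (X x, Y x)) -` (A \<times> B) \<inter> space M = (X -` A \<inter> space M) \<inter> (Y -` B \<inter> space M)"
      by auto
    also have "emeasure M \<dots> = emeasure M (X -` A \<inter> space M) * emeasure M (Y -` B \<inter> space M)"
    proof -
      have "prob ((X -` A \<inter> space M) \<inter> (Y -` B \<inter> space M)) = prob (X -` A \<inter> space M) * prob (Y -` B \<inter> space M)"
        using A B by (intro indep_setD[OF ind]) auto
      then show ?thesis by (simp add: emeasure_eq_measure ennreal_mult)
    qed
    also have "\<dots> = emeasure ?S A * emeasure ?T B"
      using Xm Ym A B by (simp add: emeasure_distr)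
    finally show "emeasure ?S A * emeasure ?T B = emeasure ?J (A \<times> B)" by simp
  qed simp
qed

lemma measure_comp:
  fixes g :: "'b::polish_space \<times> 'a::polish_space \<Rightarrow> 'c::polish_space"
    and X :: "'w \<Rightarrow> 'b" and Y :: "'w \<Rightarrow> 'a"
  assumes P: "prob_space M" and Xm: "X \<in> borel_measurable M" and Ym: "Y \<in> borel_measurable M"
    and gm: "g \<in> borel_measurable borel"
    and ind: "distr M borel X \<Otimes>\<^sub>M distr M borel Y = distr M (borel \<Otimes>\<^sub>M borel) (\<lambda>x. (X x, Y x))"
    and C: "C \<in> sets borel"
  shows "measure (distr M borel (\<lambda>\<omega>. g (X \<omega>, Y \<omega>))) C
     = measure (distr M borel X \<Otimes>\<^sub>M distr M borel Y) (g -` C)"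
proof -
  interpret prob_space M by fact
  have j: "distr M borel X \<Otimes>\<^sub>M distr M borel Y = distr M (borel \<Otimes>\<^sub>M borel) (\<lambda>x. (X x, Y x))"
    using ind by simp
  have pm: "(\<lambda>x. (X x, Y x)) \<in> measurable M (borel \<Otimes>\<^sub>M borel)" using Xm Ym by measurable
  have gm': "g \<in> measurable (borel \<Otimes>\<^sub>M borel) borel" using gm by (simp add: borel_prod)
  have gC: "g -` C \<in> sets (borel \<Otimes>\<^sub>M borel)"
    using measurable_sets[OF gm' C] by (simp add: space_pair_measure)
  have "measure (distr M borel (\<lambda>\<omega>. g (X \<omega>, Y \<omega>))) C = measure M ((\<lambda>\<omega>. g (X \<omega>, Y \<omega>)) -` C \<inter> space M)"
    using measurable_comp[OF pm gm'] C by (subst measure_distr) (auto simp: o_def)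
  also have "\<dots> = measure (distr M (borel \<Otimes>\<^sub>M borel) (\<lambda>x. (X x, Y x))) (g -` C)"
    using pm gC by (subst measure_distr) (auto intro!: arg_cong[where f="measure M"])
  finally show ?thesis using j by simp
qed

theorem theorem3p6:
  fixes M :: "'w measure"
    and g :: "'b::polish_space \<times> 'a::polish_space \<Rightarrow> 'c::polish_space"
    and X :: "'w \<Rightarrow> 'b" and Y Z :: "'w \<Rightarrow> 'a" and K :: real
  assumes "prob_space M"
    and "g \<in> borel_measurable borel"
    and "\<And>x y z. dist (g (x, y)) (g (x, z)) \<le> K * dist y z"
    and "X \<in> borel_measurable M" and "Y \<in> borel_measurable M" and "Z \<in> borel_measurable M"
    and "prob_space.indep_set M {X -` A \<inter> space M | A. A \<in> sets borel}
                                {Y -` B \<inter> space M | B. B \<in> sets borel}"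
    and "prob_space.indep_set M {X -` A \<inter> space M | A. A \<in> sets borel}
                                {Z -` B \<inter> space M | B. B \<in> sets borel}"
  shows "prokhorov_dist (distr M borel (\<lambda>\<omega>. g (X \<omega>, Y \<omega>))) (distr M borel (\<lambda>\<omega>. g (X \<omega>, Z \<omega>)))
           \<le> max 1 K * prokhorov_dist (distr M borel Y) (distr M borel Z)"
proof -
  interpret prob_space M by fact
  define K' where "K' = max 1 K"
  have K'pos: "K' > 0" "K' \<ge> 1" unfolding K'_def by auto
  let ?PX = "distr M borel X" and ?PY = "distr M borel Y" and ?PZ = "distr M borel Z"
  let ?GY = "distr M borel (\<lambda>\<omega>. g (X \<omega>, Y \<omega>))" and ?GZ = "distr M borel (\<lambda>\<omega>. g (X \<omega>, Z \<omega>))"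
  define S where "S = {e. e > 0 \<and> (\<forall>B\<in>sets borel. measure ?PY B \<le> measure ?PZ (eps_nbhd e B) + e)}"
  define T where "T = {e. e > 0 \<and> (\<forall>B\<in>sets borel. measure ?GY B \<le> measure ?GZ (eps_nbhd e B) + e)}"
  have pX: "prob_space ?PX" using assms(4) by (rule prob_space_distr)
  have pY: "prob_space ?PY" using assms(5) by (rule prob_space_distr)
  have pZ: "prob_space ?PZ" using assms(6) by (rule prob_space_distr)
  have jY: "?PX \<Otimes>\<^sub>M ?PY = distr M (borel \<Otimes>\<^sub>M borel) (\<lambda>x. (X x, Y x))"
    using indep_joint[OF assms(1,4,5,7)] .
  have jZ: "?PX \<Otimes>\<^sub>M ?PZ = distr M (borel \<Otimes>\<^sub>M borel) (\<lambda>x. (X x, Z x))"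
    using indep_joint[OF assms(1,4,6,8)] .
  have TS: "K' * e \<in> T" if "e \<in> S" for e
  proof -
    have e: "e > 0" and h: "\<forall>B\<in>sets borel. measure ?PY B \<le> measure ?PZ (eps_nbhd e B) + e"
      using that by (auto simp: S_def)
    have "measure ?GY C \<le> measure ?GZ (eps_nbhd (K' * e) C) + K' * e" if C: "C \<in> sets borel" for C
    proof -
      have "measure ?GY C = measure (?PX \<Otimes>\<^sub>M ?PY) (g -` C)"
        by (rule measure_comp[OF assms(1,4,5,2) jY C])
      also have "\<dots> \<le> measure (?PX \<Otimes>\<^sub>M ?PZ) (g -` eps_nbhd (K' * e) C) + e"
        unfolding K'_def by (rule core[OF pX pY pZ _ _ _ assms(2,3) e h C]) auto
      also have "measure (?PX \<Otimes>\<^sub>M ?PZ) (g -` eps_nbhd (K' * e) C) = measure ?GZ (eps_nbhd (K' * e) C)"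
        by (rule measure_comp[OF assms(1,4,6,2) jZ eps_nbhd_borel, symmetric])
      moreover have "e \<le> K' * e" using K'pos e by simp
      ultimately show ?thesis by linarith
    qed
    then show ?thesis using e K'pos by (auto simp: T_def)
  qed
  have S1: "1 \<in> S"
  proof -
    interpret Y: prob_space ?PY by (rule pY)
    show ?thesis unfolding S_def by (auto intro!: add_increasing)
  qed
  have Tb: "bdd_below T" unfolding T_def by (rule bdd_belowI[of _ 0]) auto
  have "Inf T / K' \<le> Inf S"
  proof (rule cInf_greatest)
    show "S \<noteq> {}" using S1 by auto
    fix e assume "e \<in> S"
    then have "Inf T \<le> K' * e" using TS Tb by (intro cInf_lower) auto
    then show "Inf T / K' \<le> e" using K'pos by (simp add: divide_le_eq mult.commute)
  qed
  then have "Inf T \<le> K' * Inf S" using K'pos by (simp add: divide_le_eq mult.commute)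
  then show ?thesis unfolding prokhorov_dist_def S_def T_def K'_def .
qed

end
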